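(* If $G$ is a $\chi_\rho$-critical graph, then $G$ is connected.
   Context: Graphs are finite and simple. A $k$-packing coloring of $G$ is a map $c:V(G)\to\{1,\ldots,k\}$ such that two distinct vertices $u,v$ with $c(u)=c(v)=i$ satisfy $d_G(u,v)>i$ (distance between vertices in different components is infinite); $\chi_\rho(G)$ is the smallest $k$ for which such a coloring exists. $G$ is $\chi_\rho$-critical if $\chi_\rho(H)<\chi_\rho(G)$ for every proper subgraph $H$ of $G$. *)

theory Defs
  imports Main "HOL-Library.Extended_Nat"
begin

definition simple_graph :: "'a set \<Rightarrow> 'a set set \<Rightarrow> bool" where
  "simple_graph V E \<longleftrightarrow> finite V \<and>
     (\<forall>e\<in>E. \<exists>u v. u \<in> V \<and> v \<in> V \<and> u \<noteq> v \<and> e = {u, v})"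

definition walk :: "'a set \<Rightarrow> 'a set set \<Rightarrow> 'a list \<Rightarrow> bool" where
  "walk V E xs \<longleftrightarrow> xs \<noteq> [] \<and> set xs \<subseteq> V \<and>
     (\<forall>i. Suc i < length xs \<longrightarrow> {xs ! i, xs ! Suc i} \<in> E)"

text \<open>Graph distance; infinite (\<infinity>) if there is no walk, e.g. between different components.\<close>
definition gdist :: "'a set \<Rightarrow> 'a set set \<Rightarrow> 'a \<Rightarrow> 'a \<Rightarrow> enat" where
  "gdist V E u v = Inf {enat (length xs - 1) | xs. walk V E xs \<and> hd xs = u \<and> last xs = v}"

definition packing_coloring :: "'a set \<Rightarrow> 'a set set \<Rightarrow> nat \<Rightarrow> ('a \<Rightarrow> nat) \<Rightarrow> bool" where
  "packing_coloring V E k c \<longleftrightarrow>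
     (\<forall>v\<in>V. c v \<in> {1..k}) \<and>
     (\<forall>u\<in>V. \<forall>v\<in>V. u \<noteq> v \<and> c u = c v \<longrightarrow> gdist V E u v > enat (c u))"

definition packing_chromatic :: "'a set \<Rightarrow> 'a set set \<Rightarrow> nat" where
  "packing_chromatic V E = (LEAST k. \<exists>c. packing_coloring V E k c)"

definition proper_subgraph :: "'a set \<Rightarrow> 'a set set \<Rightarrow> 'a set \<Rightarrow> 'a set set \<Rightarrow> bool" where
  "proper_subgraph V' E' V E \<longleftrightarrow> simple_graph V' E' \<and> V' \<subseteq> V \<and> E' \<subseteq> E \<and> (V', E') \<noteq> (V, E)"

definition chi_rho_critical :: "'a set \<Rightarrow> 'a set set \<Rightarrow> bool" where
  "chi_rho_critical V E \<longleftrightarrow>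
     (\<forall>V' E'. proper_subgraph V' E' V E \<longrightarrow> packing_chromatic V' E' < packing_chromatic V E)"

definition connected_graph :: "'a set \<Rightarrow> 'a set set \<Rightarrow> bool" where
  "connected_graph V E \<longleftrightarrow>
     (\<forall>u\<in>V. \<forall>v\<in>V. \<exists>xs. walk V E xs \<and> hd xs = u \<and> last xs = v)"

end

theory Submission
  imports Defs
begin

definition closedS :: "'a set \<Rightarrow> 'a set set \<Rightarrow> 'a set \<Rightarrow> bool" where
  "closedS V E S \<longleftrightarrow> S \<subseteq> V \<and> (\<forall>a b. a \<in> S \<longrightarrow> {a,b} \<in> E \<longrightarrow> b \<in> S)"

lemma walk_stays:
  assumes "closedS V E S" "walk V E xs" "hd xs \<in> S"
  shows "\<forall>i<length xs. xs ! i \<in> S"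
proof (intro allI impI)
  fix i assume "i < length xs"
  then show "xs ! i \<in> S"
  proof (induction i)
    case 0
    then show ?case using assms by (simp add: hd_conv_nth walk_def)
  next
    case (Suc i)
    then have "xs ! i \<in> S" by simp
    moreover have "{xs ! i, xs ! Suc i} \<in> E" using assms(2) Suc.prems by (simp add: walk_def)
    ultimately show ?case using assms(1) unfolding closedS_def by blast
  qed
qed

lemma walk_restrict:
  assumes "closedS V E S" "walk V E xs" "hd xs \<in> S"
  shows "walk S (E \<inter> {e. e \<subseteq> S}) xs"
proof -
  have A: "\<forall>i<length xs. xs ! i \<in> S" using walk_stays[OF assms] .
  have "set xs \<subseteq> S" using A by (auto simp: in_set_conv_nth)
  moreover have "\<forall>i. Suc i < length xs \<longrightarrow> {xs ! i, xs ! Suc i} \<in> E \<inter> {e. e \<subseteq> S}"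
    using A assms(2) by (auto simp: walk_def)
  ultimately show ?thesis using assms(2) by (simp add: walk_def)
qed

lemma walk_last_in:
  assumes "closedS V E S" "walk V E xs" "hd xs \<in> S"
  shows "last xs \<in> S"
proof -
  have "xs \<noteq> []" using assms(2) by (simp add: walk_def)
  then show ?thesis using walk_stays[OF assms] by (simp add: last_conv_nth)
qed

lemma gdist_le:
  assumes "closedS V E S" "x \<in> S"
  shows "gdist S (E \<inter> {e. e \<subseteq> S}) x y \<le> gdist V E x y"
  unfolding gdist_def
  apply (rule Inf_superset_mono)
  using walk_restrict[OF assms(1)] assms(2) by blast

lemma gdist_inf:
  assumes "closedS V E S" "x \<in> S" "y \<notin> S"
  shows "gdist V E x y = \<infinity>"
proof -
  have "{enat (length xs - 1) | xs. walk V E xs \<and> hd xs = x \<and> last xs = y} = {}"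
    using walk_last_in[OF assms(1)] assms(2,3) by blast
  then show ?thesis unfolding gdist_def by (metis Inf_empty top_enat_def)
qed

lemma pc_mono: "packing_coloring V E k c \<Longrightarrow> k \<le> k' \<Longrightarrow> packing_coloring V E k' c"
  unfolding packing_coloring_def by auto

lemma combine:
  assumes S: "closedS V E S" and T: "closedS V E T" and TS: "T = V - S"
    and c1: "packing_coloring S (E \<inter> {e. e \<subseteq> S}) k c1"
    and c2: "packing_coloring T (E \<inter> {e. e \<subseteq> T}) k c2"
  shows "packing_coloring V E k (\<lambda>x. if x \<in> S then c1 x else c2 x)"
  unfolding packing_coloring_def
proof (intro conjI ballI impI)
  fix v assume "v \<in> V"
  then show "(if v \<in> S then c1 v else c2 v) \<in> {1..k}"
    using c1 c2 TS unfolding packing_coloring_def by auto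
next
  fix u v assume uv: "u \<in> V" "v \<in> V"
    and h: "u \<noteq> v \<and> (if u \<in> S then c1 u else c2 u) = (if v \<in> S then c1 v else c2 v)"
  show "enat (if u \<in> S then c1 u else c2 u) < gdist V E u v"
  proof (cases "u \<in> S")
    case True
    show ?thesis
    proof (cases "v \<in> S")
      case True
      have "enat (c1 u) < gdist S (E \<inter> {e. e \<subseteq> S}) u v"
        using c1 h \<open>u \<in> S\<close> True unfolding packing_coloring_def by auto
      also have "\<dots> \<le> gdist V E u v" using gdist_le[OF S \<open>u \<in> S\<close>] .
      finally show ?thesis using \<open>u \<in> S\<close> by simp
    next
      case False
      then show ?thesis using gdist_inf[OF S \<open>u \<in> S\<close> False] by simp
    qed
  next
    case False
    then have uT: "u \<in> T" using TS uv by simp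
    show ?thesis
    proof (cases "v \<in> T")
      case True
      then have vS: "v \<notin> S" using TS by simp
      have "enat (c2 u) < gdist T (E \<inter> {e. e \<subseteq> T}) u v"
        using c2 h uT True False vS unfolding packing_coloring_def by auto
      also have "\<dots> \<le> gdist V E u v" using gdist_le[OF T uT] .
      finally show ?thesis using False by simp
    next
      case False
      then show ?thesis using gdist_inf[OF T uT False] by simp
    qed
  qed
qed

lemma exists_coloring:
  assumes "finite V"
  shows "\<exists>k c. packing_coloring V E k c"
proof -
  obtain h where h: "bij_betw h V {0..<card V}" using ex_bij_betw_finite_nat[OF assms] by blast
  have "packing_coloring V E (card V) (\<lambda>x. Suc (h x))"
    unfolding packing_coloring_def
  proof (intro conjI ballI impI)
    fix v assume "v \<in> V" then show "Suc (h v) \<in> {1..card V}"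
      using h by (auto simp: bij_betw_def Suc_le_eq)
  next
    fix u v assume "u \<in> V" "v \<in> V" "u \<noteq> v \<and> Suc (h u) = Suc (h v)"
    then have False using h by (auto simp: bij_betw_def inj_on_def)
    then show "enat (Suc (h u)) < gdist V E u v" by simp
  qed
  then show ?thesis by blast
qed

lemma chromatic_coloring:
  assumes "finite V"
  shows "\<exists>c. packing_coloring V E (packing_chromatic V E) c"
  unfolding packing_chromatic_def
  using exists_coloring[OF assms, of E] by (rule LeastI_ex)

lemma sub_simple:
  assumes "simple_graph V E" "S \<subseteq> V"
  shows "simple_graph S (E \<inter> {e. e \<subseteq> S})"
  unfolding simple_graph_def
proof (intro conjI ballI)
  show "finite S" using assms finite_subset unfolding simple_graph_def by blast
next
  fix e assume e: "e \<in> E \<inter> {e. e \<subseteq> S}"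
  then obtain a b where "a \<noteq> b" "e = {a, b}" using assms(1) unfolding simple_graph_def by blast
  then show "\<exists>u v. u \<in> S \<and> v \<in> S \<and> u \<noteq> v \<and> e = {u, v}" using e by blast
qed

theorem lemma2p4:
  fixes V :: "'a set" and E :: "'a set set"
  assumes "simple_graph V E"
    and "chi_rho_critical V E"
  shows "connected_graph V E"
proof (rule ccontr)
  assume "\<not> connected_graph V E"
  then obtain u v where uv: "u \<in> V" "v \<in> V" and nw: "\<not> (\<exists>xs. walk V E xs \<and> hd xs = u \<and> last xs = v)"
    unfolding connected_graph_def by blast
  define C where "C = {w. \<exists>xs. walk V E xs \<and> hd xs = u \<and> last xs = w}"
  have CV: "C \<subseteq> V" unfolding C_def walk_def by auto
  have edgeV: "\<And>a b. {a,b} \<in> E \<Longrightarrow> b \<in> V"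
    using assms(1) unfolding simple_graph_def by (metis doubleton_eq_iff)
  have closC: "closedS V E C"
    unfolding closedS_def
  proof (intro conjI allI impI)
    show "C \<subseteq> V" by fact
  next
    fix a b assume "a \<in> C" "{a,b} \<in> E"
    then obtain xs where xs: "walk V E xs" "hd xs = u" "last xs = a" unfolding C_def by blast
    have ne: "xs \<noteq> []" using xs by (simp add: walk_def)
    have "walk V E (xs @ [b])"
      unfolding walk_def
    proof (intro conjI allI impI)
      show "xs @ [b] \<noteq> []" by simp
      show "set (xs @ [b]) \<subseteq> V" using xs edgeV[OF \<open>{a,b} \<in> E\<close>] by (auto simp: walk_def)
    next
      fix i assume i: "Suc i < length (xs @ [b])"
      show "{(xs @ [b]) ! i, (xs @ [b]) ! Suc i} \<in> E"
      proof (cases "Suc i < length xs")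
        case True
        then show ?thesis using xs(1) by (simp add: nth_append walk_def)
      next
        case False
        then have "Suc i = length xs" using i by simp
        then have "i = length xs - 1" by simp
        then show ?thesis using ne xs(3) \<open>{a,b} \<in> E\<close> \<open>Suc i = length xs\<close>
          by (simp add: nth_append last_conv_nth)
      qed
    qed
    then show "b \<in> C" unfolding C_def using xs ne by (auto simp: hd_append)
  qed
  have closR: "closedS V E (V - C)"
    unfolding closedS_def
  proof (intro conjI allI impI)
    show "V - C \<subseteq> V" by blast
  next
    fix a b assume "a \<in> V - C" "{a,b} \<in> E"
    then have "{b,a} \<in> E" by (simp add: insert_commute)
    then show "b \<in> V - C" using closC \<open>a \<in> V - C\<close> edgeV[OF \<open>{a,b} \<in> E\<close>]
      unfolding closedS_def by blast
  qed
  have uC: "u \<in> C" unfolding C_def using uv by (intro CollectI exI[of _ "[u]"]) (simp add: walk_def)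
  have vC: "v \<notin> C" unfolding C_def using nw by blast
  have finV: "finite V" using assms(1) by (simp add: simple_graph_def)
  let ?E1 = "E \<inter> {e. e \<subseteq> C}" and ?E2 = "E \<inter> {e. e \<subseteq> V - C}"
  have p1: "proper_subgraph C ?E1 V E"
    unfolding proper_subgraph_def using sub_simple[OF assms(1) CV] CV vC uv by auto
  have p2: "proper_subgraph (V - C) ?E2 V E"
    unfolding proper_subgraph_def using sub_simple[OF assms(1), of "V - C"] uC uv by auto
  have l1: "packing_chromatic C ?E1 < packing_chromatic V E"
    using assms(2) p1 unfolding chi_rho_critical_def by blast
  have l2: "packing_chromatic (V - C) ?E2 < packing_chromatic V E"
    using assms(2) p2 unfolding chi_rho_critical_def by blast
  obtain c1 where c1: "packing_coloring C ?E1 (packing_chromatic C ?E1) c1"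
    using chromatic_coloring finite_subset[OF CV finV] by blast
  obtain c2 where c2: "packing_coloring (V - C) ?E2 (packing_chromatic (V - C) ?E2) c2"
    using chromatic_coloring finV by blast
  define k where "k = max (packing_chromatic C ?E1) (packing_chromatic (V - C) ?E2)"
  have "packing_coloring V E k (\<lambda>x. if x \<in> C then c1 x else c2 x)"
    by (rule combine[OF closC closR refl pc_mono[OF c1] pc_mono[OF c2]]) (simp_all add: k_def)
  then have "packing_chromatic V E \<le> k" unfolding packing_chromatic_def by (intro Least_le exI)
  then show False using l1 l2 k_def by linarith
qed

end
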